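(* Let $g:(0,\infty)\to(0,\infty)$ be bounded, non-decreasing and such that $g(t)=t\,g(1/t)$ for all $t>0$, and let $M=\sup_{t>0}g(t)$. Then $g(t)\ge g(1)\min\{1,t\}$ for all $t>0$. Moreover, if $\mu_\sigma$ is a symmetric probability density on $\mathbb{R}$, then for every $a\in\mathbb{R}$ the quantity $Z(a)=\int_{\mathbb{R}}g(e^{wa})\mu_\sigma(w)dw$ satisfies $\frac{g(1)}{2}\le Z(a)\le M$.
   Context: In the paper $a=\partial_i\log\pi(x)$ and $Z(a)=Z_i(x)$ is the normalising constant of the $i$-th coordinate of the locally-balanced proposal. *)

theory Defs
  imports "HOL-Analysis.Analysis"
begin

end

theory Submission
  imports Defs
begin

theorem lemma8:
  fixes g :: "real \<Rightarrow> real"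
  assumes pos: "\<And>t. t > 0 \<Longrightarrow> g t > 0"
    and bdd: "bdd_above (g ` {0<..})"
    and mono: "mono_on {0<..} g"
    and bal: "\<And>t. t > 0 \<Longrightarrow> g t = t * g (1 / t)"
  shows "(\<forall>t>0. g t \<ge> g 1 * min 1 t) \<and>
    (\<forall>\<mu> :: real \<Rightarrow> real.
       (\<mu> \<in> borel_measurable lborel \<and> (\<forall>w. \<mu> w \<ge> 0) \<and> integrable lborel \<mu> \<and>
        (\<integral>w. \<mu> w \<partial>lborel) = 1 \<and> (\<forall>w. \<mu> (- w) = \<mu> w)) \<longrightarrow>
       (\<forall>a::real.
          g 1 / 2 \<le> (\<integral>w. g (exp (w * a)) * \<mu> w \<partial>lborel) \<and>
          (\<integral>w. g (exp (w * a)) * \<mu> w \<partial>lborel) \<le> Sup (g ` {0<..})))"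
proof (intro conjI allI impI)
  have ge1: "g 1 \<le> g t" if "t \<ge> 1" for t
    using mono that by (auto simp: mono_on_def)
  show "g 1 * min 1 t \<le> g t" if t: "t > 0" for t
  proof (cases "t \<ge> 1")
    case True then show ?thesis using ge1 by simp
  next
    case False
    then have "g 1 \<le> g (1/t)" using t by (intro ge1) simp
    then have "t * g 1 \<le> t * g (1/t)" using t by simp
    then show ?thesis using False bal[OF t] by (simp add: mult.commute)
  qed
  define M where "M = Sup (g ` {0<..})"
  have leM: "g t \<le> M" if "t > 0" for t
    unfolding M_def using bdd that by (intro cSup_upper) auto
  fix \<mu> :: "real \<Rightarrow> real" and a :: real
  assume H: "\<mu> \<in> borel_measurable lborel \<and> (\<forall>w. \<mu> w \<ge> 0) \<and> integrable lborel \<mu> \<and>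
        (\<integral>w. \<mu> w \<partial>lborel) = 1 \<and> (\<forall>w. \<mu> (- w) = \<mu> w)"
  then have mm: "\<mu> \<in> borel_measurable lborel" and nn: "\<And>w. \<mu> w \<ge> 0" and ii: "integrable lborel \<mu>"
    and one: "(\<integral>w. \<mu> w \<partial>lborel) = 1" and sym: "\<And>w. \<mu> (- w) = \<mu> w" by auto
  have "mono (g \<circ> exp)"
    using mono by (auto simp: mono_def mono_on_def)
  then have ge: "(g \<circ> exp) \<in> borel_measurable borel" by (rule borel_measurable_mono)
  have hm: "(\<lambda>w. g (exp (w * a))) \<in> borel_measurable lborel"
    using measurable_compose[OF _ ge, of "\<lambda>w. w * a" lborel] by (simp add: o_def)
  have int: "integrable lborel (\<lambda>w. g (exp (w * b)) * \<mu> w)" for b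
  proof -
    have i1: "integrable lborel (\<lambda>w. M * \<mu> w)" using ii by simp
    have "(\<lambda>w. g (exp (w * b))) \<in> borel_measurable lborel"
      using measurable_compose[OF _ ge, of "\<lambda>w. w * b" lborel] by (simp add: o_def)
    then have i2: "(\<lambda>w. g (exp (w * b)) * \<mu> w) \<in> borel_measurable lborel" using mm by simp
    have i3: "AE x in lborel. norm (g (exp (x * b)) * \<mu> x) \<le> norm (M * \<mu> x)"
    proof (intro AE_I2)
      fix x
      have "0 < g (exp (x * b))" "g (exp (x * b)) \<le> M" using pos leM by auto
      then show "norm (g (exp (x * b)) * \<mu> x) \<le> norm (M * \<mu> x)"
        using nn[of x] by (simp add: abs_mult mult_right_mono)
    qed
    show ?thesis by (rule Bochner_Integration.integrable_bound[OF i1 i2 i3])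
  qed
  show "(\<integral>w. g (exp (w * a)) * \<mu> w \<partial>lborel) \<le> Sup (g ` {0<..})"
  proof -
    have "(\<integral>w. g (exp (w * a)) * \<mu> w \<partial>lborel) \<le> (\<integral>w. M * \<mu> w \<partial>lborel)"
      using int ii nn leM by (intro integral_mono) (auto intro: mult_right_mono)
    also have "\<dots> = M" using one by simp
    finally show ?thesis unfolding M_def .
  qed
  have refl: "(\<integral>w. g (exp (w * a)) * \<mu> w \<partial>lborel) = (\<integral>w. g (exp (w * (-a))) * \<mu> w \<partial>lborel)"
    using lborel_integral_real_affine[of "-1" "\<lambda>w. g (exp (w * a)) * \<mu> w" 0] sym by simp
  have "g 1 = (\<integral>w. g 1 * \<mu> w \<partial>lborel)" using one by simp
  also have "\<dots> \<le> (\<integral>w. g (exp (w * a)) * \<mu> w + g (exp (w * (-a))) * \<mu> w \<partial>lborel)"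
  proof (intro integral_mono)
    show "integrable lborel (\<lambda>w. g 1 * \<mu> w)" using ii by simp
    show "integrable lborel (\<lambda>w. g (exp (w * a)) * \<mu> w + g (exp (w * (-a))) * \<mu> w)"
      using int[of a] int[of "-a"] by (intro Bochner_Integration.integrable_add) auto
    fix w
    have "g 1 \<le> g (exp (w * a)) + g (exp (w * (-a)))"
    proof (cases "w * a \<ge> 0")
      case True
      then have "g 1 \<le> g (exp (w * a))" by (intro ge1) simp
      then show ?thesis using pos[of "exp (w * (-a))"] by simp
    next
      case False
      then have "g 1 \<le> g (exp (w * (-a)))" by (intro ge1) simp
      then show ?thesis using pos[of "exp (w * a)"] by simp
    qed
    then show "g 1 * \<mu> w \<le> g (exp (w * a)) * \<mu> w + g (exp (w * (-a))) * \<mu> w"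
      using nn[of w] by (metis distrib_right mult_right_mono)
  qed
  also have "\<dots> = 2 * (\<integral>w. g (exp (w * a)) * \<mu> w \<partial>lborel)"
    using int[of a] int[of "-a"] refl by (subst Bochner_Integration.integral_add) auto
  finally show "g 1 / 2 \<le> (\<integral>w. g (exp (w * a)) * \<mu> w \<partial>lborel)" by simp
qed

end
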